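(* Let $A$ be a ring. The Krull valuation spectrum $\mathrm{Spev}(A)$ embeds in $\mathrm{Speh}^m(A)$, and as a subset of $\mathrm{Speh}^m(A)$ it is $$\mathrm{Spev}(A)=\{x\in\mathrm{Speh}^m(A):|2(x)|\le1\}=\{x\in\mathrm{Speh}^m(A):|n(x)|\le1\text{ for all }n\in\mathbb{N}\}.$$
   Context: A halo is a commutative unital semiring with a partial order compatible with $+$ and $\cdot$; an aura is a halo whose semiring is a semifield; positive means $0<1$. A generalized seminorm on a ring $A$ is a map $|\cdot|:A\to R$ into a positive totally ordered aura with $|0|=0,|1|=1$, $|a+b|\le|a|+|b|$, $|ab|\le|a||b|$; multiplicative if $|ab|=|a||b|$; tempered if $R$ has tempered growth (for every non-zero $P\in\mathbb{N}[X]$ and $x\in R$, $x^n\le P(n)$ for all $n$ implies $x\le1$). Two seminorms $|\cdot|_1,|\cdot|_2$ on $A$ are multiplicatively equivalent if for all $a,b,c$: $|a|_1|c|_1\le|b|_1\iff|a|_2|c|_2\le|b|_2$; they are equivalent if $|a|_1\le|b|_1\iff|a|_2\le|b|_2$. A place is a multiplicative equivalence class of seminorms; $\mathrm{Speh}^m(A)$ is the set of tempered multiplicative places, and for $x$ a place, $|a(x)|$ denotes $|a|$ for a chosen representative. For a totally ordered group $\Gamma$, $R_\Gamma=\{0\}\cup\Gamma$ with $0$ smallest and absorbing and $a+b=\max(a,b)$. $\mathrm{Spev}(A)$ is the set of equivalence classes of Krull valuations, i.e. multiplicative seminorms $A\to R_\Gamma$. *)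

theory Defs
  imports Main "HOL-Computational_Algebra.Polynomial"
begin

record 'r halo =
  hcarrier :: "'r set"
  hzero :: 'r
  hone :: 'r
  hadd :: "'r \<Rightarrow> 'r \<Rightarrow> 'r"
  hmul :: "'r \<Rightarrow> 'r \<Rightarrow> 'r"
  hle :: "'r \<Rightarrow> 'r \<Rightarrow> bool"

definition comm_semiring_on :: "'r halo \<Rightarrow> bool" where
  "comm_semiring_on R \<longleftrightarrow>
     hzero R \<in> hcarrier R \<and> hone R \<in> hcarrier R \<and>
     (\<forall>x\<in>hcarrier R. \<forall>y\<in>hcarrier R. hadd R x y \<in> hcarrier R \<and> hmul R x y \<in> hcarrier R) \<and>
     (\<forall>x\<in>hcarrier R. \<forall>y\<in>hcarrier R. \<forall>z\<in>hcarrier R.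
        hadd R (hadd R x y) z = hadd R x (hadd R y z) \<and>
        hmul R (hmul R x y) z = hmul R x (hmul R y z) \<and>
        hmul R x (hadd R y z) = hadd R (hmul R x y) (hmul R x z)) \<and>
     (\<forall>x\<in>hcarrier R. \<forall>y\<in>hcarrier R. hadd R x y = hadd R y x \<and> hmul R x y = hmul R y x) \<and>
     (\<forall>x\<in>hcarrier R. hadd R (hzero R) x = x \<and> hmul R (hone R) x = x \<and> hmul R (hzero R) x = hzero R)"

definition partial_order_on_halo :: "'r halo \<Rightarrow> bool" where
  "partial_order_on_halo R \<longleftrightarrow>
     (\<forall>x\<in>hcarrier R. hle R x x) \<and>
     (\<forall>x\<in>hcarrier R. \<forall>y\<in>hcarrier R. hle R x y \<and> hle R y x \<longrightarrow> x = y) \<and>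
     (\<forall>x\<in>hcarrier R. \<forall>y\<in>hcarrier R. \<forall>z\<in>hcarrier R. hle R x y \<and> hle R y z \<longrightarrow> hle R x z)"

definition order_compatible :: "'r halo \<Rightarrow> bool" where
  "order_compatible R \<longleftrightarrow>
     (\<forall>x\<in>hcarrier R. \<forall>y\<in>hcarrier R. \<forall>z\<in>hcarrier R. hle R x y \<longrightarrow>
        hle R (hadd R x z) (hadd R y z) \<and> hle R (hmul R x z) (hmul R y z))"

definition is_halo :: "'r halo \<Rightarrow> bool" where
  "is_halo R \<longleftrightarrow> comm_semiring_on R \<and> partial_order_on_halo R \<and> order_compatible R"

definition is_semifield :: "'r halo \<Rightarrow> bool" where
  "is_semifield R \<longleftrightarrow> hzero R \<noteq> hone R \<and>
     (\<forall>x\<in>hcarrier R. x \<noteq> hzero R \<longrightarrow> (\<exists>y\<in>hcarrier R. hmul R x y = hone R))"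

definition is_aura :: "'r halo \<Rightarrow> bool" where
  "is_aura R \<longleftrightarrow> is_halo R \<and> is_semifield R"

definition halo_positive :: "'r halo \<Rightarrow> bool" where
  "halo_positive R \<longleftrightarrow> hle R (hzero R) (hone R) \<and> hzero R \<noteq> hone R"

definition halo_total :: "'r halo \<Rightarrow> bool" where
  "halo_total R \<longleftrightarrow> (\<forall>x\<in>hcarrier R. \<forall>y\<in>hcarrier R. hle R x y \<or> hle R y x)"

primrec hnat :: "'r halo \<Rightarrow> nat \<Rightarrow> 'r" where
  "hnat R 0 = hzero R"
| "hnat R (Suc n) = hadd R (hnat R n) (hone R)"

primrec hpow :: "'r halo \<Rightarrow> 'r \<Rightarrow> nat \<Rightarrow> 'r" where
  "hpow R x 0 = hone R"
| "hpow R x (Suc n) = hmul R (hpow R x n) x"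

definition hpoly_eval :: "'r halo \<Rightarrow> nat poly \<Rightarrow> nat \<Rightarrow> 'r" where
  "hpoly_eval R P n =
     foldr (\<lambda>i acc. hadd R (hmul R (hnat R (coeff P i)) (hpow R (hnat R n) i)) acc)
           [0..<Suc (degree P)] (hzero R)"

definition tempered_growth :: "'r halo \<Rightarrow> bool" where
  "tempered_growth R \<longleftrightarrow>
     (\<forall>P :: nat poly. P \<noteq> 0 \<longrightarrow> (\<forall>x\<in>hcarrier R.
        (\<forall>n. hle R (hpow R x n) (hpoly_eval R P n)) \<longrightarrow> hle R x (hone R)))"

definition gen_seminorm :: "'r halo \<Rightarrow> ('a::comm_ring_1 \<Rightarrow> 'r) \<Rightarrow> bool" where
  "gen_seminorm R f \<longleftrightarrow>
     halo_positive R \<and> halo_total R \<and> is_aura R \<and>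
     (\<forall>a. f a \<in> hcarrier R) \<and> f 0 = hzero R \<and> f 1 = hone R \<and>
     (\<forall>a b. hle R (f (a + b)) (hadd R (f a) (f b))) \<and>
     (\<forall>a b. hle R (f (a * b)) (hmul R (f a) (f b)))"

definition mult_seminorm :: "'r halo \<Rightarrow> ('a::comm_ring_1 \<Rightarrow> 'r) \<Rightarrow> bool" where
  "mult_seminorm R f \<longleftrightarrow> gen_seminorm R f \<and> (\<forall>a b. f (a * b) = hmul R (f a) (f b))"

definition tempered_mult_seminorm :: "'r halo \<Rightarrow> ('a::comm_ring_1 \<Rightarrow> 'r) \<Rightarrow> bool" where
  "tempered_mult_seminorm R f \<longleftrightarrow> mult_seminorm R f \<and> tempered_growth R"

definition mult_equiv ::
  "'r halo \<Rightarrow> ('a::comm_ring_1 \<Rightarrow> 'r) \<Rightarrow> 's halo \<Rightarrow> ('a \<Rightarrow> 's) \<Rightarrow> bool" where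
  "mult_equiv R1 f1 R2 f2 \<longleftrightarrow>
     (\<forall>a b c. hle R1 (hmul R1 (f1 a) (f1 c)) (f1 b) \<longleftrightarrow> hle R2 (hmul R2 (f2 a) (f2 c)) (f2 b))"

definition seminorm_equiv ::
  "'r halo \<Rightarrow> ('a::comm_ring_1 \<Rightarrow> 'r) \<Rightarrow> 's halo \<Rightarrow> ('a \<Rightarrow> 's) \<Rightarrow> bool" where
  "seminorm_equiv R1 f1 R2 f2 \<longleftrightarrow> (\<forall>a b. hle R1 (f1 a) (f1 b) \<longleftrightarrow> hle R2 (f2 a) (f2 b))"

record 'g ogroup =
  gcarrier :: "'g set"
  gmul :: "'g \<Rightarrow> 'g \<Rightarrow> 'g"
  gone :: 'g
  gle :: "'g \<Rightarrow> 'g \<Rightarrow> bool"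

definition tot_ord_abgroup :: "'g ogroup \<Rightarrow> bool" where
  "tot_ord_abgroup G \<longleftrightarrow>
     gone G \<in> gcarrier G \<and>
     (\<forall>x\<in>gcarrier G. \<forall>y\<in>gcarrier G. gmul G x y \<in> gcarrier G \<and> gmul G x y = gmul G y x) \<and>
     (\<forall>x\<in>gcarrier G. \<forall>y\<in>gcarrier G. \<forall>z\<in>gcarrier G. gmul G (gmul G x y) z = gmul G x (gmul G y z)) \<and>
     (\<forall>x\<in>gcarrier G. gmul G (gone G) x = x \<and> (\<exists>y\<in>gcarrier G. gmul G x y = gone G)) \<and>
     (\<forall>x\<in>gcarrier G. gle G x x) \<and>
     (\<forall>x\<in>gcarrier G. \<forall>y\<in>gcarrier G. gle G x y \<and> gle G y x \<longrightarrow> x = y) \<and>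
     (\<forall>x\<in>gcarrier G. \<forall>y\<in>gcarrier G. \<forall>z\<in>gcarrier G. gle G x y \<and> gle G y z \<longrightarrow> gle G x z) \<and>
     (\<forall>x\<in>gcarrier G. \<forall>y\<in>gcarrier G. gle G x y \<or> gle G y x) \<and>
     (\<forall>x\<in>gcarrier G. \<forall>y\<in>gcarrier G. \<forall>z\<in>gcarrier G. gle G x y \<longrightarrow> gle G (gmul G x z) (gmul G y z))"

text \<open>\<open>R_\<Gamma> = {0} \<union> \<Gamma>\<close>, with \<open>0\<close> represented by \<open>None\<close>, addition = max.\<close>
definition RGamma :: "'g ogroup \<Rightarrow> 'g option halo" where
  "RGamma G =
    \<lparr> hcarrier = insert None (Some ` gcarrier G),
      hzero = None,
      hone = Some (gone G),
      hadd = (\<lambda>x y. case x of None \<Rightarrow> y | Some a \<Rightarrow>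
                 (case y of None \<Rightarrow> x | Some b \<Rightarrow> Some (if gle G a b then b else a))),
      hmul = (\<lambda>x y. case x of None \<Rightarrow> None | Some a \<Rightarrow>
                 (case y of None \<Rightarrow> None | Some b \<Rightarrow> Some (gmul G a b))),
      hle = (\<lambda>x y. case x of None \<Rightarrow> True | Some a \<Rightarrow>
                 (case y of None \<Rightarrow> False | Some b \<Rightarrow> gle G a b)) \<rparr>"

definition krull_valuation :: "'g ogroup \<Rightarrow> ('a::comm_ring_1 \<Rightarrow> 'g option) \<Rightarrow> bool" where
  "krull_valuation G v \<longleftrightarrow> tot_ord_abgroup G \<and> mult_seminorm (RGamma G) v"

end

theory Submission imports Defs begin

locale thalo =
  fixes R :: "'r halo"
  assumes H: "is_halo R" and P: "halo_positive R" and T: "halo_total R" and S: "is_semifield R"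
begin

abbreviation "Cr \<equiv> hcarrier R"
abbreviation "zr \<equiv> hzero R"
abbreviation "er \<equiv> hone R"
abbreviation pl (infixl "\<oplus>" 65) where "x \<oplus> y \<equiv> hadd R x y"
abbreviation ml (infixl "\<otimes>" 70) where "x \<otimes> y \<equiv> hmul R x y"
abbreviation lq (infix "\<preceq>" 50) where "x \<preceq> y \<equiv> hle R x y"

lemma CS: "comm_semiring_on R" using H by (simp add: is_halo_def)
lemma PO: "partial_order_on_halo R" using H by (simp add: is_halo_def)
lemma OC: "order_compatible R" using H by (simp add: is_halo_def)

lemma zero_in[simp]: "zr \<in> Cr" and one_in[simp]: "er \<in> Cr"
  using CS by (auto simp: comm_semiring_on_def)
lemma add_in[simp]: "x \<in> Cr \<Longrightarrow> y \<in> Cr \<Longrightarrow> x \<oplus> y \<in> Cr"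
  and mul_in[simp]: "x \<in> Cr \<Longrightarrow> y \<in> Cr \<Longrightarrow> x \<otimes> y \<in> Cr"
  using CS by (auto simp: comm_semiring_on_def)
lemma add_assoc: "x \<in> Cr \<Longrightarrow> y \<in> Cr \<Longrightarrow> w \<in> Cr \<Longrightarrow> (x \<oplus> y) \<oplus> w = x \<oplus> (y \<oplus> w)"
  and mul_assoc: "x \<in> Cr \<Longrightarrow> y \<in> Cr \<Longrightarrow> w \<in> Cr \<Longrightarrow> (x \<otimes> y) \<otimes> w = x \<otimes> (y \<otimes> w)"
  and distrib: "x \<in> Cr \<Longrightarrow> y \<in> Cr \<Longrightarrow> w \<in> Cr \<Longrightarrow> x \<otimes> (y \<oplus> w) = x \<otimes> y \<oplus> x \<otimes> w"
  using CS by (auto simp: comm_semiring_on_def)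
lemma add_comm: "x \<in> Cr \<Longrightarrow> y \<in> Cr \<Longrightarrow> x \<oplus> y = y \<oplus> x"
  and mul_comm: "x \<in> Cr \<Longrightarrow> y \<in> Cr \<Longrightarrow> x \<otimes> y = y \<otimes> x"
  using CS by (auto simp: comm_semiring_on_def)
lemma add_zl[simp]: "x \<in> Cr \<Longrightarrow> zr \<oplus> x = x" and mul_ol[simp]: "x \<in> Cr \<Longrightarrow> er \<otimes> x = x"
  and mul_zl[simp]: "x \<in> Cr \<Longrightarrow> zr \<otimes> x = zr"
  using CS by (auto simp: comm_semiring_on_def)
lemma add_zr[simp]: "x \<in> Cr \<Longrightarrow> x \<oplus> zr = x" using add_comm[of x zr] by simp
lemma mul_or[simp]: "x \<in> Cr \<Longrightarrow> x \<otimes> er = x" using mul_comm[of x er] by simp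
lemma mul_zr[simp]: "x \<in> Cr \<Longrightarrow> x \<otimes> zr = zr" using mul_comm[of x zr] by simp
lemma distrib_r: "x \<in> Cr \<Longrightarrow> y \<in> Cr \<Longrightarrow> w \<in> Cr \<Longrightarrow> (x \<oplus> y) \<otimes> w = x \<otimes> w \<oplus> y \<otimes> w"
  by (simp add: distrib mul_comm)
lemma mul_ac4: "a \<in> Cr \<Longrightarrow> b \<in> Cr \<Longrightarrow> c \<in> Cr \<Longrightarrow> d \<in> Cr \<Longrightarrow>
   (a \<otimes> b) \<otimes> (c \<otimes> d) = (a \<otimes> c) \<otimes> (b \<otimes> d)"
proof -
  assume a: "a \<in> Cr" "b \<in> Cr" "c \<in> Cr" "d \<in> Cr"
  have "(a \<otimes> b) \<otimes> (c \<otimes> d) = a \<otimes> (b \<otimes> (c \<otimes> d))" using a mul_assoc by simp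
  also have "b \<otimes> (c \<otimes> d) = c \<otimes> (b \<otimes> d)" using a mul_assoc mul_comm[of b c] by (metis)
  also have "a \<otimes> (c \<otimes> (b \<otimes> d)) = (a \<otimes> c) \<otimes> (b \<otimes> d)" using a mul_assoc by simp
  finally show ?thesis .
qed

lemma le_refl[simp]: "x \<in> Cr \<Longrightarrow> x \<preceq> x"
  and le_antisym: "x \<in> Cr \<Longrightarrow> y \<in> Cr \<Longrightarrow> x \<preceq> y \<Longrightarrow> y \<preceq> x \<Longrightarrow> x = y"
  and le_trans: "x \<preceq> y \<Longrightarrow> y \<preceq> w \<Longrightarrow> x \<in> Cr \<Longrightarrow> y \<in> Cr \<Longrightarrow> w \<in> Cr \<Longrightarrow> x \<preceq> w"
  using PO unfolding partial_order_on_halo_def by blast+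
lemma le_total: "x \<in> Cr \<Longrightarrow> y \<in> Cr \<Longrightarrow> x \<preceq> y \<or> y \<preceq> x"
  using T unfolding halo_total_def by blast
lemma add_rmono: "x \<preceq> y \<Longrightarrow> x \<in> Cr \<Longrightarrow> y \<in> Cr \<Longrightarrow> w \<in> Cr \<Longrightarrow> x \<oplus> w \<preceq> y \<oplus> w"
  and mul_rmono: "x \<preceq> y \<Longrightarrow> x \<in> Cr \<Longrightarrow> y \<in> Cr \<Longrightarrow> w \<in> Cr \<Longrightarrow> x \<otimes> w \<preceq> y \<otimes> w"
  using OC unfolding order_compatible_def by blast+
lemma add_mono: "x \<preceq> y \<Longrightarrow> u \<preceq> w \<Longrightarrow> x \<in> Cr \<Longrightarrow> y \<in> Cr \<Longrightarrow> u \<in> Cr \<Longrightarrow> w \<in> Cr \<Longrightarrow> x \<oplus> u \<preceq> y \<oplus> w"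
proof -
  assume a: "x \<preceq> y" "u \<preceq> w" "x \<in> Cr" "y \<in> Cr" "u \<in> Cr" "w \<in> Cr"
  have "x \<oplus> u \<preceq> y \<oplus> u" using a add_rmono by blast
  moreover have "u \<oplus> y \<preceq> w \<oplus> y" using a add_rmono by blast
  moreover have "u \<oplus> y = y \<oplus> u" "w \<oplus> y = y \<oplus> w" using a add_comm by auto
  ultimately show ?thesis using a le_trans[of "x \<oplus> u" "y \<oplus> u" "y \<oplus> w"] by simp
qed
lemma mul_mono: "x \<preceq> y \<Longrightarrow> u \<preceq> w \<Longrightarrow> x \<in> Cr \<Longrightarrow> y \<in> Cr \<Longrightarrow> u \<in> Cr \<Longrightarrow> w \<in> Cr \<Longrightarrow> x \<otimes> u \<preceq> y \<otimes> w"
proof -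
  assume a: "x \<preceq> y" "u \<preceq> w" "x \<in> Cr" "y \<in> Cr" "u \<in> Cr" "w \<in> Cr"
  have "x \<otimes> u \<preceq> y \<otimes> u" using a mul_rmono by blast
  moreover have "u \<otimes> y \<preceq> w \<otimes> y" using a mul_rmono by blast
  moreover have "u \<otimes> y = y \<otimes> u" "w \<otimes> y = y \<otimes> w" using a mul_comm by auto
  ultimately show ?thesis using a le_trans[of "x \<otimes> u" "y \<otimes> u" "y \<otimes> w"] by simp
qed
lemma zero_le_one[simp]: "zr \<preceq> er" and zero_ne_one[simp]: "zr \<noteq> er"
  using P by (auto simp: halo_positive_def)
lemma zero_le[simp]: "x \<in> Cr \<Longrightarrow> zr \<preceq> x"
  using mul_rmono[OF zero_le_one, of x] by simp
lemma le_add: "x \<in> Cr \<Longrightarrow> y \<in> Cr \<Longrightarrow> x \<preceq> x \<oplus> y"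
  using add_mono[of x x zr y] by simp
lemma le_zero_iff: "x \<in> Cr \<Longrightarrow> x \<preceq> zr \<longleftrightarrow> x = zr"
  using le_antisym zero_le by fastforce
lemma inv_ex: "x \<in> Cr \<Longrightarrow> x \<noteq> zr \<Longrightarrow> \<exists>y\<in>Cr. x \<otimes> y = er"
  using S by (auto simp: is_semifield_def)
lemma nzd: "x \<in> Cr \<Longrightarrow> y \<in> Cr \<Longrightarrow> x \<noteq> zr \<Longrightarrow> y \<noteq> zr \<Longrightarrow> x \<otimes> y \<noteq> zr"
proof
  assume a: "x \<in> Cr" "y \<in> Cr" "x \<noteq> zr" "y \<noteq> zr" "x \<otimes> y = zr"
  then obtain xi where xi: "xi \<in> Cr" "x \<otimes> xi = er" using inv_ex by blast
  have "y = (xi \<otimes> x) \<otimes> y" using xi a mul_comm by simp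
  also have "\<dots> = zr" using a xi mul_assoc by simp
  finally show False using a by simp
qed

lemma pow_in[simp]: "x \<in> Cr \<Longrightarrow> hpow R x n \<in> Cr" by (induct n) auto
lemma pow_mul: "x \<in> Cr \<Longrightarrow> y \<in> Cr \<Longrightarrow> hpow R (x \<otimes> y) n = hpow R x n \<otimes> hpow R y n"
  by (induct n) (auto simp: mul_ac4)
lemma pow_add: "x \<in> Cr \<Longrightarrow> hpow R x (m + n) = hpow R x m \<otimes> hpow R x n"
  by (induct n) (auto simp: mul_assoc)
lemma pow_one[simp]: "hpow R er n = er" by (induct n) auto
lemma pow_mono: "x \<preceq> y \<Longrightarrow> x \<in> Cr \<Longrightarrow> y \<in> Cr \<Longrightarrow> hpow R x n \<preceq> hpow R y n"
  by (induct n) (auto intro: mul_mono)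

lemma nat_in[simp]: "hnat R n \<in> Cr" by (induct n) auto
lemma nat_add: "hnat R (m + n) = hnat R m \<oplus> hnat R n"
  by (induct n) (auto simp: add_assoc)
lemma nat_one[simp]: "hnat R (Suc 0) = er" by simp
lemma nat_mul: "hnat R (m * n) = hnat R m \<otimes> hnat R n"
  by (induct n) (auto simp: nat_add distrib add_comm)
lemma nat_mono: "m \<le> n \<Longrightarrow> hnat R m \<preceq> hnat R n"
proof -
  assume "m \<le> n"
  then obtain k where "n = m + k" using le_Suc_ex by blast
  then show ?thesis using le_add[of "hnat R m" "hnat R k"] by (simp add: nat_add)
qed
lemma nat_pow: "hnat R (m ^ i) = hpow R (hnat R m) i"
  by (induct i) (auto simp: nat_mul mul_comm)

lemma foldr_eq: "foldr (\<lambda>i acc. hadd R (hmul R (hnat R (coeff P i)) (hpow R (hnat R n) i)) acc) xs zr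
   = hnat R (sum_list (map (\<lambda>i. coeff P i * n ^ i) xs))"
  by (induct xs) (auto simp: nat_add nat_mul nat_pow)

lemma hpoly_eval_eq: "hpoly_eval R P n = hnat R (poly P n)"
proof -
  have "sum_list (map (\<lambda>i. coeff P i * n ^ i) [0..<Suc (degree P)]) = (\<Sum>i\<in>{0..<Suc (degree P)}. coeff P i * n ^ i)"
    by (simp only: interv_sum_list_conv_sum_set_nat set_upt)
  also have "\<dots> = poly P n" unfolding poly_altdef atLeast0LessThan lessThan_Suc_atMost ..
  finally show ?thesis unfolding hpoly_eval_def foldr_eq by simp
qed

lemma tempered_use: "tempered_growth R \<Longrightarrow> Q \<noteq> 0 \<Longrightarrow> x \<in> Cr \<Longrightarrow>
   (\<And>n. hpow R x n \<preceq> hnat R (poly Q n)) \<Longrightarrow> x \<preceq> er"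
  unfolding tempered_growth_def by (simp add: hpoly_eval_eq)

end

primrec hsum :: "'r halo \<Rightarrow> (nat \<Rightarrow> 'r) \<Rightarrow> nat \<Rightarrow> 'r" where
  "hsum R g 0 = hzero R"
| "hsum R g (Suc n) = hadd R (hsum R g n) (g n)"

context thalo begin
lemma hsum_in: "(\<forall>k<n. g k \<in> Cr) \<Longrightarrow> hsum R g n \<in> Cr" by (induct n) auto
lemma hsum_mono: "(\<forall>k<n. g k \<preceq> g' k \<and> g k \<in> Cr \<and> g' k \<in> Cr) \<Longrightarrow> hsum R g n \<preceq> hsum R g' n"
proof (induct n)
  case 0 then show ?case by simp
next
  case (Suc n)
  then have a: "hsum R g n \<preceq> hsum R g' n" by simp
  have "hsum R g n \<in> Cr" "hsum R g' n \<in> Cr" using Suc.prems by (auto intro!: hsum_in)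
  then show ?case using add_mono[OF a, of "g n" "g' n"] Suc.prems by simp
qed
lemma hsum_const: "c \<in> Cr \<Longrightarrow> hsum R (\<lambda>_. c) n = hnat R n \<otimes> c"
  by (induct n) (auto simp: distrib_r)
end

locale tsn = thalo R for R :: "'r halo" +
  fixes f :: "'a::comm_ring_1 \<Rightarrow> 'r"
  assumes fin[simp]: "f a \<in> hcarrier R" and f0[simp]: "f 0 = hzero R" and f1[simp]: "f 1 = hone R"
    and ftri: "hle R (f (a + b)) (hadd R (f a) (f b))"
    and fmul: "f (a * b) = hmul R (f a) (f b)"
    and temp: "tempered_growth R"
begin

lemma f_pow: "f (a ^ n) = hpow R (f a) n"
proof (induct n)
  case 0 then show ?case by simp
next
  case (Suc n)
  have "f (a ^ Suc n) = f (a ^ n * a)" by (simp only: power_Suc2)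
  then show ?case using Suc by (simp add: fmul)
qed

lemma f_sum: "f (\<Sum>k<n. g k) \<preceq> hsum R (\<lambda>k. f (g k)) n"
proof (induct n)
  case 0 then show ?case by simp
next
  case (Suc n)
  have a: "f (\<Sum>k<Suc n. g k) \<preceq> f (\<Sum>k<n. g k) \<oplus> f (g n)" using ftri by simp
  have c: "hsum R (\<lambda>k. f (g k)) n \<in> Cr" by (auto intro: hsum_in)
  have b: "f (\<Sum>k<n. g k) \<oplus> f (g n) \<preceq> hsum R (\<lambda>k. f (g k)) n \<oplus> f (g n)"
    by (rule add_rmono[OF Suc]) (auto simp: c)
  show ?case using le_trans[OF a b] c by simp
qed

lemma f_bin: assumes f2: "f 2 \<preceq> er" shows "m < 2^j \<Longrightarrow> f (of_nat m) \<preceq> hnat R j"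
proof (induct j arbitrary: m)
  case 0 then show ?case by simp
next
  case (Suc j)
  define q where "q = m div 2"
  define r where "r = m mod 2"
  have "m = 2 * q + r" unfolding q_def r_def by simp
  then have m: "(of_nat m :: 'a) = 2 * of_nat q + of_nat r" by simp
  have q: "q < 2^j" using Suc.prems unfolding q_def by auto
  have r: "f (of_nat r) \<preceq> er"
  proof -
    have "r = 0 \<or> r = 1" unfolding r_def by auto
    then show ?thesis by auto
  qed
  have a: "f (of_nat m) \<preceq> f (2 * of_nat q) \<oplus> f (of_nat r)" using ftri m by metis
  have b: "f (2 * of_nat q) \<preceq> er \<otimes> hnat R j" unfolding fmul
    by (rule mul_mono[OF f2 Suc.hyps[OF q]]) auto
  have c: "f (2 * of_nat q) \<oplus> f (of_nat r) \<preceq> er \<otimes> hnat R j \<oplus> er"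
    by (rule add_mono[OF b r]) auto
  have "er \<otimes> hnat R j \<oplus> er = hnat R (Suc j)" by simp
  then show ?case using le_trans[OF a c] by simp
qed

lemma f_nat_le: assumes f2: "f 2 \<preceq> er" shows "f (of_nat n) \<preceq> er"
proof (rule tempered_use[OF temp, of "[:1, n:]"])
  fix k
  have "n ^ k \<le> (2 ^ n) ^ k" by (rule power_mono) (auto intro: less_imp_le less_exp)
  also have "\<dots> = 2 ^ (n * k)" by (simp add: power_mult)
  also have "\<dots> < 2 ^ (n * k + 1)" by simp
  finally have "f (of_nat (n ^ k)) \<preceq> hnat R (n * k + 1)" by (rule f_bin[OF f2])
  moreover have "poly [:1, n:] k = n * k + 1" by (simp add: mult.commute)
  moreover have "hpow R (f (of_nat n)) k = f (of_nat (n ^ k))" by (simp add: f_pow)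
  ultimately show "hpow R (f (of_nat n)) k \<preceq> hnat R (poly [:1, n:] k)"
    by (simp only:)
qed auto

lemma ultra_m: assumes f2: "f 2 \<preceq> er" and m: "m \<in> Cr" and am: "f a \<preceq> m" and bm: "f b \<preceq> m"
  shows "f (a + b) \<preceq> m"
proof -
  let ?x = "f (a + b)"
  have tm: "f (of_nat (n choose k) * a ^ k * b ^ (n - k)) \<preceq> hpow R m n" if "k < Suc n" for n k
  proof -
    have "f (of_nat (n choose k) * a ^ k * b ^ (n - k)) = (f (of_nat (n choose k)) \<otimes> hpow R (f a) k) \<otimes> hpow R (f b) (n - k)"
      by (simp add: fmul f_pow)
    also have "\<dots> \<preceq> (er \<otimes> hpow R m k) \<otimes> hpow R m (n - k)"
      by (intro mul_mono f_nat_le[OF f2] pow_mono am bm) (auto simp: m)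
    also have "(er \<otimes> hpow R m k) \<otimes> hpow R m (n - k) = hpow R m n"
      using that m by (simp add: pow_add[symmetric])
    finally show ?thesis .
  qed
  have bound: "hpow R ?x n \<preceq> hnat R (Suc n) \<otimes> hpow R m n" for n
  proof -
    have "hpow R ?x n = f ((a + b) ^ n)" by (simp add: f_pow)
    also have "(a + b) ^ n = (\<Sum>k<Suc n. of_nat (n choose k) * a ^ k * b ^ (n - k))"
      unfolding binomial_ring lessThan_Suc_atMost ..
    finally have e: "hpow R ?x n = f (\<Sum>k<Suc n. of_nat (n choose k) * a ^ k * b ^ (n - k))" .
    have s1: "f (\<Sum>k<Suc n. of_nat (n choose k) * a ^ k * b ^ (n - k))
        \<preceq> hsum R (\<lambda>k. f (of_nat (n choose k) * a ^ k * b ^ (n - k))) (Suc n)" by (rule f_sum)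
    have s2: "hsum R (\<lambda>k. f (of_nat (n choose k) * a ^ k * b ^ (n - k))) (Suc n) \<preceq> hsum R (\<lambda>_. hpow R m n) (Suc n)"
      using tm m by (intro hsum_mono) auto
    have s3: "hsum R (\<lambda>_. hpow R m n) (Suc n) = hnat R (Suc n) \<otimes> hpow R m n"
      using m by (rule hsum_const[OF pow_in])
    have t: "f (\<Sum>k<Suc n. of_nat (n choose k) * a ^ k * b ^ (n - k)) \<preceq> hsum R (\<lambda>_. hpow R m n) (Suc n)"
      by (rule le_trans[OF s1 s2]) (auto intro!: hsum_in simp del: hsum.simps simp: m)
    show ?thesis unfolding e s3[symmetric] by (rule t)
  qed
  show ?thesis
  proof (cases "m = zr")
    case True
    have "hpow R ?x 1 \<preceq> hnat R 2 \<otimes> hpow R m 1" using bound[of 1] by (simp add: numeral_2_eq_2)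
    then have "?x \<preceq> zr" using True by simp
    then show ?thesis using True by simp
  next
    case False
    then obtain mi where mi: "mi \<in> Cr" "m \<otimes> mi = er" using inv_ex m by blast
    let ?y = "?x \<otimes> mi"
    have "?y \<preceq> er"
    proof (rule tempered_use[OF temp, of "[:1, 1:]"])
      fix n
      have "hpow R ?y n = hpow R ?x n \<otimes> hpow R mi n" using mi by (simp add: pow_mul)
      also have "\<dots> \<preceq> (hnat R (Suc n) \<otimes> hpow R m n) \<otimes> hpow R mi n"
        using bound[of n] mi m by (intro mul_rmono) auto
      also have "(hnat R (Suc n) \<otimes> hpow R m n) \<otimes> hpow R mi n = hnat R (Suc n) \<otimes> hpow R (m \<otimes> mi) n"
        using mi m by (simp add: mul_assoc flip: pow_mul)
      also have "\<dots> = hnat R (poly [:1, 1:] n)" using mi by simp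
      finally show "hpow R ?y n \<preceq> hnat R (poly [:1, 1:] n)" using mi m by (auto intro: mul_in)
    qed (use mi in auto)
    then have "?y \<otimes> m \<preceq> er \<otimes> m" using mi m by (intro mul_rmono) auto
    moreover have "?y \<otimes> m = ?x" using mi m by (simp add: mul_assoc mul_comm[of mi m])
    ultimately show ?thesis using m by simp
  qed
qed

lemma ultra: assumes f2: "f 2 \<preceq> er" shows "f (a + b) \<preceq> f a \<or> f (a + b) \<preceq> f b"
  using le_total[of "f a" "f b"] ultra_m[OF f2, of "f a" a b] ultra_m[OF f2, of "f b" a b] by auto

end

locale toag =
  fixes G :: "'g ogroup"
  assumes TG: "tot_ord_abgroup G"
begin
abbreviation "Gc \<equiv> gcarrier G"
lemma TGp:
  "gone G \<in> Gc"
  "\<forall>x\<in>Gc. \<forall>y\<in>Gc. gmul G x y \<in> Gc \<and> gmul G x y = gmul G y x"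
  "\<forall>x\<in>Gc. \<forall>y\<in>Gc. \<forall>z\<in>Gc. gmul G (gmul G x y) z = gmul G x (gmul G y z)"
  "\<forall>x\<in>Gc. gmul G (gone G) x = x \<and> (\<exists>y\<in>Gc. gmul G x y = gone G)"
  "\<forall>x\<in>Gc. gle G x x"
  "\<forall>x\<in>Gc. \<forall>y\<in>Gc. gle G x y \<and> gle G y x \<longrightarrow> x = y"
  "\<forall>x\<in>Gc. \<forall>y\<in>Gc. \<forall>z\<in>Gc. gle G x y \<and> gle G y z \<longrightarrow> gle G x z"
  "\<forall>x\<in>Gc. \<forall>y\<in>Gc. gle G x y \<or> gle G y x"
  "\<forall>x\<in>Gc. \<forall>y\<in>Gc. \<forall>z\<in>Gc. gle G x y \<longrightarrow> gle G (gmul G x z) (gmul G y z)"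
  using TG unfolding tot_ord_abgroup_def
  apply -
  apply (elim conjE, assumption)+
  done
lemma g1[simp]: "gone G \<in> Gc" by (rule TGp(1))
lemma gm[simp]: "x \<in> Gc \<Longrightarrow> y \<in> Gc \<Longrightarrow> gmul G x y \<in> Gc" using TGp(2) by blast
lemma gcomm: "x \<in> Gc \<Longrightarrow> y \<in> Gc \<Longrightarrow> gmul G x y = gmul G y x" using TGp(2) by blast
lemma gassoc: "x \<in> Gc \<Longrightarrow> y \<in> Gc \<Longrightarrow> w \<in> Gc \<Longrightarrow> gmul G (gmul G x y) w = gmul G x (gmul G y w)"
  using TGp(3) by blast
lemma g1l[simp]: "x \<in> Gc \<Longrightarrow> gmul G (gone G) x = x" using TGp(4) by blast
lemma ginv: "x \<in> Gc \<Longrightarrow> \<exists>y\<in>Gc. gmul G x y = gone G" using TGp(4) by blast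
lemma grefl[simp]: "x \<in> Gc \<Longrightarrow> gle G x x" using TGp(5) by blast
lemma gantisym: "x \<in> Gc \<Longrightarrow> y \<in> Gc \<Longrightarrow> gle G x y \<Longrightarrow> gle G y x \<Longrightarrow> x = y" using TGp(6) by blast
lemma gtrans: "x \<in> Gc \<Longrightarrow> y \<in> Gc \<Longrightarrow> w \<in> Gc \<Longrightarrow> gle G x y \<Longrightarrow> gle G y w \<Longrightarrow> gle G x w" using TGp(7) by blast
lemma gtot: "x \<in> Gc \<Longrightarrow> y \<in> Gc \<Longrightarrow> gle G x y \<or> gle G y x" using TGp(8) by blast
lemma gcompat: "x \<in> Gc \<Longrightarrow> y \<in> Gc \<Longrightarrow> w \<in> Gc \<Longrightarrow> gle G x y \<Longrightarrow> gle G (gmul G x w) (gmul G y w)" using TGp(9) by blast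
lemma gcompat_l: "x \<in> Gc \<Longrightarrow> y \<in> Gc \<Longrightarrow> w \<in> Gc \<Longrightarrow> gle G x y \<Longrightarrow> gle G (gmul G w x) (gmul G w y)"
  using gcompat gcomm by metis

definition "gmax a b = (if gle G a b then b else a)"
lemma gmax_in[simp]: "a \<in> Gc \<Longrightarrow> b \<in> Gc \<Longrightarrow> gmax a b \<in> Gc" by (simp add: gmax_def)
lemma gmax_comm: "a \<in> Gc \<Longrightarrow> b \<in> Gc \<Longrightarrow> gmax a b = gmax b a"
  unfolding gmax_def using gantisym gtot by metis
lemma gmax_assoc: "a \<in> Gc \<Longrightarrow> b \<in> Gc \<Longrightarrow> c \<in> Gc \<Longrightarrow> gmax (gmax a b) c = gmax a (gmax b c)"
  unfolding gmax_def using gantisym gtot gtrans by (smt (verit))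
lemma gmax_distrib: "a \<in> Gc \<Longrightarrow> b \<in> Gc \<Longrightarrow> c \<in> Gc \<Longrightarrow> gmul G a (gmax b c) = gmax (gmul G a b) (gmul G a c)"
proof -
  assume abc: "a \<in> Gc" "b \<in> Gc" "c \<in> Gc"
  show ?thesis
  proof (cases "gle G b c")
    case True
    then show ?thesis using gcompat_l[OF abc(2,3,1) True] abc by (simp add: gmax_def)
  next
    case False
    then have cb: "gle G c b" using gtot abc by blast
    have "gle G (gmul G a c) (gmul G a b)" using gcompat_l[OF abc(3,2,1) cb] .
    then show ?thesis using False abc gantisym[of "gmul G a b" "gmul G a c"] by (auto simp: gmax_def)
  qed
qed
lemma gmax_mono: "a \<in> Gc \<Longrightarrow> b \<in> Gc \<Longrightarrow> c \<in> Gc \<Longrightarrow> gle G a b \<Longrightarrow> gle G (gmax a c) (gmax b c)"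
  unfolding gmax_def using gtot gtrans by (smt (verit) grefl)
lemma gmax_ge1: "a \<in> Gc \<Longrightarrow> b \<in> Gc \<Longrightarrow> gle G a (gmax a b)"
  and gmax_ge2: "a \<in> Gc \<Longrightarrow> b \<in> Gc \<Longrightarrow> gle G b (gmax a b)"
  unfolding gmax_def using gtot by auto

lemma RG_add: "hadd (RGamma G) x y = (case x of None \<Rightarrow> y | Some a \<Rightarrow> (case y of None \<Rightarrow> x | Some b \<Rightarrow> Some (gmax a b)))"
  unfolding gmax_def RGamma_def by simp
lemma RG_simps: "hcarrier (RGamma G) = insert None (Some ` Gc)" "hzero (RGamma G) = None" "hone (RGamma G) = Some (gone G)"
  "hmul (RGamma G) x y = (case x of None \<Rightarrow> None | Some a \<Rightarrow> (case y of None \<Rightarrow> None | Some b \<Rightarrow> Some (gmul G a b)))"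
  "hle (RGamma G) x y = (case x of None \<Rightarrow> True | Some a \<Rightarrow> (case y of None \<Rightarrow> False | Some b \<Rightarrow> gle G a b))"
  by (simp_all add: RGamma_def)

lemma RG_props: "is_halo (RGamma G)" "is_semifield (RGamma G)" "halo_positive (RGamma G)" "halo_total (RGamma G)"
proof -
  show "is_halo (RGamma G)"
    unfolding is_halo_def comm_semiring_on_def partial_order_on_halo_def order_compatible_def RG_add RG_simps
    apply (auto simp: gassoc gmax_assoc gmax_distrib gcompat gmax_mono
       dest: gantisym intro: gtrans)
    using gmax_comm gcomm gmax_ge2 by blast+
  show "is_semifield (RGamma G)"
    unfolding is_semifield_def RG_simps by (auto dest: ginv)
  show "halo_positive (RGamma G)" unfolding halo_positive_def RG_simps by simp
  show "halo_total (RGamma G)" unfolding halo_total_def RG_simps using gtot by auto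
qed

lemma RG_thalo: "thalo (RGamma G)" using RG_props by (simp add: thalo_def is_aura_def)

lemma RG_le_add1: "x \<in> hcarrier (RGamma G) \<Longrightarrow> y \<in> hcarrier (RGamma G) \<Longrightarrow> hle (RGamma G) x (hadd (RGamma G) x y)"
  and RG_le_add2: "x \<in> hcarrier (RGamma G) \<Longrightarrow> y \<in> hcarrier (RGamma G) \<Longrightarrow> hle (RGamma G) y (hadd (RGamma G) x y)"
  unfolding RG_add RG_simps by (auto simp: gmax_ge1 gmax_ge2)
end


lemma RG_hnat: "hnat (RGamma G) (Suc k) = Some (gone G)"
proof (induct k)
  case 0 then show ?case by (simp add: RGamma_def)
next
  case (Suc k)
  have "hnat (RGamma G) (Suc (Suc k)) = hadd (RGamma G) (hnat (RGamma G) (Suc k)) (hone (RGamma G))" by simp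
  also have "\<dots> = hadd (RGamma G) (Some (gone G)) (Some (gone G))" unfolding Suc by (simp add: RGamma_def)
  also have "\<dots> = Some (gone G)" by (simp add: RGamma_def)
  finally show ?case .
qed

lemma RG_tempered: assumes "krull_valuation G v" shows "tempered_growth (RGamma G)"
proof -
  have th: "thalo (RGamma G)" using assms
    unfolding krull_valuation_def mult_seminorm_def gen_seminorm_def is_aura_def thalo_def by blast
  show ?thesis unfolding tempered_growth_def
  proof (intro allI impI ballI)
    fix P :: "nat poly" and x
    assume P: "P \<noteq> 0" and x: "x \<in> hcarrier (RGamma G)"
      and h: "\<forall>n. hle (RGamma G) (hpow (RGamma G) x n) (hpoly_eval (RGamma G) P n)"
    have "coeff P (degree P) \<le> (\<Sum>i\<le>degree P. coeff P i)" by (rule member_le_sum) auto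
    moreover have "coeff P (degree P) \<noteq> 0" using P by simp
    ultimately have "0 < (\<Sum>i\<le>degree P. coeff P i)" by linarith
    then have "0 < poly P (Suc 0)" by (simp add: poly_altdef)
    then obtain k where k: "poly P (Suc 0) = Suc k" using gr0_conv_Suc by blast
    have "hpow (RGamma G) x (Suc 0) = x" using x by (simp add: thalo.mul_ol[OF th])
    then have "hle (RGamma G) x (hnat (RGamma G) (Suc k))"
      using h[rule_format, of "Suc 0"] thalo.hpoly_eval_eq[OF th] k by simp
    moreover have "hnat (RGamma G) (Suc k) = hone (RGamma G)" unfolding RG_hnat by (simp add: RGamma_def)
    ultimately show "hle (RGamma G) x (hone (RGamma G))" by simp
  qed
qed

lemma equiv_iff:
  assumes m1: "\<forall>a b. f1 (a*b) = hmul R1 (f1 a) (f1 b)" and m2: "\<forall>a b. f2 (a*b) = hmul R2 (f2 a) (f2 b)"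
  shows "seminorm_equiv R1 f1 R2 f2 \<longleftrightarrow> mult_equiv R1 f1 R2 f2"
  unfolding seminorm_equiv_def mult_equiv_def
proof
  assume h: "\<forall>a b. hle R1 (f1 a) (f1 b) = hle R2 (f2 a) (f2 b)"
  show "\<forall>a b c. hle R1 (hmul R1 (f1 a) (f1 c)) (f1 b) = hle R2 (hmul R2 (f2 a) (f2 c)) (f2 b)"
  proof (intro allI)
    fix a b c
    show "hle R1 (hmul R1 (f1 a) (f1 c)) (f1 b) = hle R2 (hmul R2 (f2 a) (f2 c)) (f2 b)"
      using h[rule_format, of "a*c" b] m1 m2 by simp
  qed
next
  assume h: "\<forall>a b c. hle R1 (hmul R1 (f1 a) (f1 c)) (f1 b) = hle R2 (hmul R2 (f2 a) (f2 c)) (f2 b)"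
  show "\<forall>a b. hle R1 (f1 a) (f1 b) = hle R2 (f2 a) (f2 b)"
  proof (intro allI)
    fix a b
    show "hle R1 (f1 a) (f1 b) = hle R2 (f2 a) (f2 b)"
      using h[rule_format, of a 1 b] m1[rule_format, of a 1, symmetric] m2[rule_format, of a 1, symmetric] by simp
  qed
qed

lemma tsn_intro: "tempered_mult_seminorm R f \<Longrightarrow> tsn R f"
  unfolding tempered_mult_seminorm_def mult_seminorm_def gen_seminorm_def is_aura_def
  by (intro tsn.intro thalo.intro tsn_axioms.intro) auto

context thalo begin
definition G0 :: "'r ogroup" where
  "G0 = \<lparr>gcarrier = Cr - {zr}, gmul = hmul R, gone = er, gle = hle R\<rparr>"

lemma G0_inv: "x \<in> Cr \<Longrightarrow> x \<noteq> zr \<Longrightarrow> \<exists>y\<in>Cr - {zr}. x \<otimes> y = er"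
  using inv_ex by (metis mul_zr zero_ne_one DiffI singletonD)

lemma G0_toag: "toag G0"
proof (rule toag.intro)
  show "tot_ord_abgroup G0" unfolding tot_ord_abgroup_def G0_def ogroup.select_convs
    apply (intro conjI ballI impI)
    apply (metis DiffI one_in singletonD zero_ne_one)
    apply (simp add: nzd)
    apply (simp add: mul_comm)
    apply (simp add: mul_assoc)
    apply simp
    apply (simp add: G0_inv)
    apply simp
    using le_antisym apply blast
    using le_trans apply blast
    using le_total apply blast
    using mul_rmono apply blast
    done
qed
end

context tsn begin
definition v0 :: "'a \<Rightarrow> 'r option" where
  "v0 a = (if f a = zr then None else Some (f a))"

lemma v0_mul: "v0 (a * b) = hmul (RGamma G0) (v0 a) (v0 b)"
  unfolding v0_def RGamma_def G0_def by (auto simp: fmul nzd)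

lemma v0_le: "hle R (f x) (f y) \<longleftrightarrow> hle (RGamma G0) (v0 x) (v0 y)"
  unfolding v0_def RGamma_def G0_def using le_zero_iff by auto

lemma v0_in: "v0 a \<in> hcarrier (RGamma G0)"
  unfolding v0_def RGamma_def G0_def by auto

lemma v0_krull: assumes f2: "f 2 \<preceq> er" shows "krull_valuation G0 v0"
proof -
  have tg: "toag G0" by (rule G0_toag)
  have th: "thalo (RGamma G0)" by (rule toag.RG_thalo[OF tg])
  have tri: "hle (RGamma G0) (v0 (a + b)) (hadd (RGamma G0) (v0 a) (v0 b))" for a b
  proof -
    from ultra[OF f2, of a b] show ?thesis
    proof
      assume "f (a + b) \<preceq> f a"
      then have "hle (RGamma G0) (v0 (a + b)) (v0 a)" using v0_le by blast
      then show ?thesis using thalo.le_trans[OF th _ toag.RG_le_add1[OF tg]] v0_in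
        by (meson thalo.add_in[OF th])
    next
      assume "f (a + b) \<preceq> f b"
      then have "hle (RGamma G0) (v0 (a + b)) (v0 b)" using v0_le by blast
      then show ?thesis using thalo.le_trans[OF th _ toag.RG_le_add2[OF tg]] v0_in
        by (meson thalo.add_in[OF th])
    qed
  qed
  show ?thesis
    unfolding krull_valuation_def mult_seminorm_def gen_seminorm_def is_aura_def
  proof (intro conjI allI)
    show "tot_ord_abgroup G0" by (rule toag.TG[OF tg])
    show "halo_positive (RGamma G0)" "halo_total (RGamma G0)" "is_halo (RGamma G0)" "is_semifield (RGamma G0)"
      using toag.RG_props[OF tg] by auto
    show "v0 a \<in> hcarrier (RGamma G0)" for a by (rule v0_in)
    show "v0 0 = hzero (RGamma G0)" by (simp add: v0_def RGamma_def)
    show "v0 1 = hone (RGamma G0)" using zero_ne_one[symmetric] by (simp add: v0_def RGamma_def G0_def)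
    show "hle (RGamma G0) (v0 (a + b)) (hadd (RGamma G0) (v0 a) (v0 b))" for a b by (rule tri)
    show "v0 (a * b) = hmul (RGamma G0) (v0 a) (v0 b)" for a b by (rule v0_mul)
    show "hle (RGamma G0) (v0 (a * b)) (hmul (RGamma G0) (v0 a) (v0 b))" for a b
      unfolding v0_mul[symmetric] by (rule thalo.le_refl[OF th v0_in])
  qed
qed

lemma v0_equiv: "mult_equiv R f (RGamma G0) v0"
  unfolding mult_equiv_def by (simp add: fmul[symmetric] v0_mul[symmetric] v0_le)
end



theorem lemma3p6:
  shows
  "(\<forall>(G::'g ogroup) (v::'a::comm_ring_1 \<Rightarrow> 'g option).
      krull_valuation G v \<longrightarrow> tempered_mult_seminorm (RGamma G) v)
   \<and> (\<forall>(G1::'g ogroup) (v1::'a \<Rightarrow> 'g option) (G2::'h ogroup) (v2::'a \<Rightarrow> 'h option).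
      krull_valuation G1 v1 \<and> krull_valuation G2 v2 \<longrightarrow>
      (seminorm_equiv (RGamma G1) v1 (RGamma G2) v2 \<longleftrightarrow> mult_equiv (RGamma G1) v1 (RGamma G2) v2))
   \<and> (\<forall>(R::'r halo) (f::'a \<Rightarrow> 'r). tempered_mult_seminorm R f \<longrightarrow>
        ((\<forall>(G::'g ogroup) (v::'a \<Rightarrow> 'g option).
            krull_valuation G v \<and> mult_equiv R f (RGamma G) v \<longrightarrow> hle R (f 2) (hone R))
         \<and> (hle R (f 2) (hone R) \<longrightarrow>
            (\<exists>(G::'r ogroup) (v::'a \<Rightarrow> 'r option). krull_valuation G v \<and> mult_equiv R f (RGamma G) v))
         \<and> (hle R (f 2) (hone R) \<longleftrightarrow> (\<forall>n::nat. hle R (f (of_nat n)) (hone R)))))"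
  


proof -
  have P1: "\<forall>(G::'g ogroup) (v::'a::comm_ring_1 \<Rightarrow> 'g option).
      krull_valuation G v \<longrightarrow> tempered_mult_seminorm (RGamma G) v"
    using RG_tempered by (auto simp: tempered_mult_seminorm_def krull_valuation_def)
  have P2: "\<forall>(G1::'g ogroup) (v1::'a \<Rightarrow> 'g option) (G2::'h ogroup) (v2::'a \<Rightarrow> 'h option).
      krull_valuation G1 v1 \<and> krull_valuation G2 v2 \<longrightarrow>
      (seminorm_equiv (RGamma G1) v1 (RGamma G2) v2 \<longleftrightarrow> mult_equiv (RGamma G1) v1 (RGamma G2) v2)"
    by (intro allI impI equiv_iff) (auto simp: krull_valuation_def mult_seminorm_def)
  have P3: "tempered_mult_seminorm R f \<Longrightarrow>
        ((\<forall>(G::'g ogroup) (v::'a \<Rightarrow> 'g option).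
            krull_valuation G v \<and> mult_equiv R f (RGamma G) v \<longrightarrow> hle R (f 2) (hone R))
         \<and> (hle R (f 2) (hone R) \<longrightarrow>
            (\<exists>(G::'r ogroup) (v::'a \<Rightarrow> 'r option). krull_valuation G v \<and> mult_equiv R f (RGamma G) v))
         \<and> (hle R (f 2) (hone R) \<longleftrightarrow> (\<forall>n::nat. hle R (f (of_nat n)) (hone R))))"
    for R :: "'r halo" and f :: "'a \<Rightarrow> 'r"
  proof -
    assume tm: "tempered_mult_seminorm R f"
    interpret tsn R f by (rule tsn_intro[OF tm])
    have A: "hle R (f 2) (hone R)" if k: "krull_valuation G v" and me: "mult_equiv R f (RGamma G) v"
      for G :: "'g ogroup" and v :: "'a \<Rightarrow> 'g option"
    proof -
      have gs: "gen_seminorm (RGamma G) v" and vm: "\<forall>a b. v (a * b) = hmul (RGamma G) (v a) (v b)"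
        using k by (auto simp: krull_valuation_def mult_seminorm_def)
      have v1: "v 1 = Some (gone G)" using gs by (simp add: gen_seminorm_def RGamma_def)
      have "hle (RGamma G) (v (1 + 1)) (hadd (RGamma G) (v 1) (v 1))"
        using gs unfolding gen_seminorm_def by blast
      then have "hle (RGamma G) (v 2) (v 1)" using v1 by (simp add: one_add_one RGamma_def)
      moreover have "hmul (RGamma G) (v 2) (v 1) = v 2" using vm[rule_format, of 2 1] by simp
      ultimately have "hle (RGamma G) (hmul (RGamma G) (v 2) (v 1)) (v 1)" by simp
      then have "hle R (hmul R (f 2) (f 1)) (f 1)" using me unfolding mult_equiv_def by blast
      then show ?thesis by simp
    qed
    have B: "\<exists>(G::'r ogroup) (v::'a \<Rightarrow> 'r option). krull_valuation G v \<and> mult_equiv R f (RGamma G) v"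
      if f2: "hle R (f 2) (hone R)"
      using v0_krull[OF f2] v0_equiv by blast
    have C: "hle R (f 2) (hone R) \<longleftrightarrow> (\<forall>n::nat. hle R (f (of_nat n)) (hone R))"
    proof
      assume "hle R (f 2) (hone R)" then show "\<forall>n::nat. hle R (f (of_nat n)) (hone R)"
        using f_nat_le by blast
    next
      assume "\<forall>n::nat. hle R (f (of_nat n)) (hone R)"
      then show "hle R (f 2) (hone R)" using spec[of _ 2] by (metis of_nat_numeral)
    qed
    show ?thesis using A B C by blast
  qed
  show ?thesis using P1 P2 P3 by blast
qed

end
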